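(* Let PS1 and PS2 be pure strategies (as in the context) with $m_{PS1}$ finite, and suppose PS2 is complementary to PS1, i.e. $\Delta_{PS1}(X)<\Delta_{PS2}(X)$ for some $X\in\mathcal{S}_{\mathrm{non}}$. Then there exists a mixed strategy MS derived from PS1 and PS2 such that $m_{MS}(X)\le m_{PS1}(X)$ for every initial population $X$ and $m_{MS}(X)<m_{PS1}(X)$ for some initial population $X$.
   Context: A fitness function $f$ on a finite set is to be maximised. A metaheuristic generates populations $\Phi_0,\Phi_1,\dots$. Let $\mathcal{S}$ be the finite set of all populations, $\mathcal{S}_{\mathrm{opt}}$ those containing at least one optimal solution, $\mathcal{S}_{\mathrm{non}}=\mathcal{S}\setminus\mathcal{S}_{\mathrm{opt}}$. The sequence is a time-homogeneous Markov chain on $\mathcal{S}$ with transition probabilities $P(X,Y)=\Pr(\Phi_{t+1}=Y\mid\Phi_t=X)$, every state of $\mathcal{S}_{\mathrm{opt}}$ absorbing. The expected hitting time $m(X)\in[0,\infty]$ is the expected number of generations until first entering $\mathcal{S}_{\mathrm{opt}}$ from $\Phi_0=X$ ($m(X)=0$ on $\mathcal{S}_{\mathrm{opt}}$). A pure strategy is such a time-independent transition matrix. PS1, PS2 are pure strategies with transition matrices $P_1,P_2$ on the same $\mathcal{S}$ (with $\mathcal{S}_{\mathrm{opt}}$ absorbing), expected hitting times $m_{PS1},m_{PS2}$. A mixed strategy MS derived from PS1 and PS2 assigns to each $X\in\mathcal{S}$ probabilities $P_X(PS1)\in[0,1]$, $P_X(PS2)=1-P_X(PS1)$, and has transition matrix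 $P_{MS}(X,Y)=P_X(PS1)P_1(X,Y)+P_X(PS2)P_2(X,Y)$, with expected hitting time $m_{MS}$. With $d(X)=m_{PS1}(X)$, for $X\in\mathcal{S}_{\mathrm{non}}$: $\Delta_{PS1}(X)=d(X)-\sum_{Y\in\mathcal{S}_{\mathrm{non}}}P_1(X,Y)d(Y)$, $\Delta_{PS2}(X)=d(X)-\sum_{Y\in\mathcal{S}_{\mathrm{non}}}P_2(X,Y)d(Y)$. *)

theory Defs
  imports "HOL-Analysis.Analysis"
begin

text \<open>A pure strategy: a time-homogeneous transition matrix on the finite set S of
populations, with every state of Sopt absorbing.\<close>
definition transition_matrix :: "'a set \<Rightarrow> 'a set \<Rightarrow> ('a \<Rightarrow> 'a \<Rightarrow> real) \<Rightarrow> bool" where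
  "transition_matrix S Sopt P \<longleftrightarrow>
     (\<forall>X\<in>S. \<forall>Y\<in>S. 0 \<le> P X Y) \<and>
     (\<forall>X\<in>S. (\<Sum>Y\<in>S. P X Y) = 1) \<and>
     (\<forall>X\<in>Sopt. P X X = 1)"

text \<open>surv N P t X = Pr(Phi_0, ..., Phi_t all lie in N | Phi_0 = X),
  i.e. with N = S_non, the probability that the hitting time of S_opt exceeds t.\<close>
fun surv :: "'a set \<Rightarrow> ('a \<Rightarrow> 'a \<Rightarrow> real) \<Rightarrow> nat \<Rightarrow> 'a \<Rightarrow> real" where
  "surv N P 0 X = (if X \<in> N then 1 else 0)"
| "surv N P (Suc t) X = (if X \<in> N then (\<Sum>Y\<in>N. P X Y * surv N P t Y) else 0)"

text \<open>Expected hitting time of S_opt (values in [0,\<infinity>]), via E[T] = sum_{t\<ge>0} Pr(T > t).\<close>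
definition hit_time :: "'a set \<Rightarrow> 'a set \<Rightarrow> ('a \<Rightarrow> 'a \<Rightarrow> real) \<Rightarrow> 'a \<Rightarrow> ennreal" where
  "hit_time S Sopt P X = (\<Sum>t. ennreal (surv (S - Sopt) P t X))"

definition mixed :: "('a \<Rightarrow> real) \<Rightarrow> ('a \<Rightarrow> 'a \<Rightarrow> real) \<Rightarrow> ('a \<Rightarrow> 'a \<Rightarrow> real) \<Rightarrow> 'a \<Rightarrow> 'a \<Rightarrow> real" where
  "mixed p P1 P2 X Y = p X * P1 X Y + (1 - p X) * P2 X Y"

definition drift :: "'a set \<Rightarrow> 'a set \<Rightarrow> ('a \<Rightarrow> real) \<Rightarrow> ('a \<Rightarrow> 'a \<Rightarrow> real) \<Rightarrow> 'a \<Rightarrow> real" where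
  "drift S Sopt d P X = d X - (\<Sum>Y\<in>S - Sopt. P X Y * d Y)"

end

theory Submission
  imports Defs
begin

lemma surv_nonneg:
  assumes "\<forall>X\<in>N. \<forall>Y\<in>N. 0 \<le> Q X Y"
  shows "0 \<le> surv N Q t X"
  using assms by (induction t arbitrary: X) (auto intro!: sum_nonneg)

lemma surv_out: "X \<notin> N \<Longrightarrow> surv N Q t X = 0"
  by (cases t) auto

lemma surv_shift:
  assumes "X \<in> N"
  shows "(\<Sum>t<Suc n. surv N Q t X) = 1 + (\<Sum>Y\<in>N. Q X Y * (\<Sum>t<n. surv N Q t Y))"
proof -
  have "(\<Sum>t<Suc n. surv N Q t X) = surv N Q 0 X + (\<Sum>t<n. surv N Q (Suc t) X)"
    by (rule sum.lessThan_Suc_shift)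
  also have "\<dots> = 1 + (\<Sum>t<n. \<Sum>Y\<in>N. Q X Y * surv N Q t Y)"
    using assms by simp
  also have "\<dots> = 1 + (\<Sum>Y\<in>N. Q X Y * (\<Sum>t<n. surv N Q t Y))"
    by (simp add: sum_distrib_left sum.swap[of _ "{..<n}"])
  finally show ?thesis .
qed

lemma partial_le:
  assumes Q: "\<forall>X\<in>N. \<forall>Y\<in>N. 0 \<le> Q X Y" and d: "\<And>X. 0 \<le> d X"
    and drift: "\<forall>X\<in>N. 1 + (\<Sum>Y\<in>N. Q X Y * d Y) \<le> d X"
  shows "(\<Sum>t<n. surv N Q t X) \<le> d X"
proof (induction n arbitrary: X)
  case 0
  then show ?case using d by simp
next
  case (Suc n)
  show ?case
  proof (cases "X \<in> N")
    case True
    have "(\<Sum>t<Suc n. surv N Q t X) = 1 + (\<Sum>Y\<in>N. Q X Y * (\<Sum>t<n. surv N Q t Y))"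
      using True by (rule surv_shift)
    also have "\<dots> \<le> 1 + (\<Sum>Y\<in>N. Q X Y * d Y)"
      using Suc.IH Q True by (auto intro!: sum_mono mult_left_mono)
    also have "\<dots> \<le> d X" using drift True by auto
    finally show ?thesis .
  next
    case False
    then show ?thesis using d by (simp add: surv_out)
  qed
qed

lemma ennsum_le:
  assumes "\<And>t. 0 \<le> f t" and "\<And>n. (\<Sum>t<n. f t) \<le> c"
  shows "(\<Sum>t. ennreal (f t)) \<le> ennreal c"
  unfolding suminf_eq_SUP
proof (rule SUP_least)
  fix n
  show "(\<Sum>t<n. ennreal (f t)) \<le> ennreal c"
    using assms by (simp add: ennreal_leI)
qed

theorem lemma3:
  fixes S Sopt :: "'a set" and P1 P2 :: "'a \<Rightarrow> 'a \<Rightarrow> real"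
  assumes "finite S" and "Sopt \<subseteq> S"
    and "transition_matrix S Sopt P1" and "transition_matrix S Sopt P2"
    and "\<forall>X\<in>S. hit_time S Sopt P1 X < \<infinity>"
    and "\<exists>X\<in>S - Sopt.
           drift S Sopt (\<lambda>Y. enn2real (hit_time S Sopt P1 Y)) P1 X
         < drift S Sopt (\<lambda>Y. enn2real (hit_time S Sopt P1 Y)) P2 X"
  shows "\<exists>p :: 'a \<Rightarrow> real. (\<forall>X\<in>S. 0 \<le> p X \<and> p X \<le> 1) \<and>
           (\<forall>X\<in>S. hit_time S Sopt (mixed p P1 P2) X \<le> hit_time S Sopt P1 X) \<and>
           (\<exists>X\<in>S. hit_time S Sopt (mixed p P1 P2) X < hit_time S Sopt P1 X)"
proof -
  define N where "N = S - Sopt"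
  define d where "d = (\<lambda>Y. enn2real (hit_time S Sopt P1 Y))"
  have finN: "finite N" using assms(1) N_def by simp
  have P1nn: "\<forall>X\<in>N. \<forall>Y\<in>N. 0 \<le> P1 X Y" using assms(3) N_def
    by (auto simp: transition_matrix_def)
  have P2nn: "\<forall>X\<in>N. \<forall>Y\<in>N. 0 \<le> P2 X Y" using assms(4) N_def
    by (auto simp: transition_matrix_def)
  have dnn: "\<And>X. 0 \<le> d X" unfolding d_def by simp
  have s1nn: "\<And>t X. 0 \<le> surv N P1 t X" using P1nn by (rule surv_nonneg)
  have summ: "summable (\<lambda>t. surv N P1 t X)" if "X \<in> S" for X
  proof (rule summable_suminf_not_top)
    show "\<And>t. 0 \<le> surv N P1 t X" by (rule s1nn)
    show "(\<Sum>t. ennreal (surv N P1 t X)) \<noteq> top"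
      using assms(5) that by (auto simp: hit_time_def N_def)
  qed
  have summ': "summable (\<lambda>t. surv N P1 t X)" for X
  proof (cases "X \<in> S")
    case True then show ?thesis by (rule summ)
  next
    case False then have "X \<notin> N" using N_def by auto
    then show ?thesis by (simp add: surv_out)
  qed
  have dsum: "d X = (\<Sum>t. surv N P1 t X)" for X
  proof -
    have "hit_time S Sopt P1 X = ennreal (\<Sum>t. surv N P1 t X)"
      unfolding hit_time_def N_def[symmetric]
      by (rule suminf_ennreal_eq) (use s1nn summ' in \<open>auto intro: summable_sums\<close>)
    then show ?thesis unfolding d_def by (simp add: suminf_nonneg s1nn summ')
  qed
  have hit_eq: "hit_time S Sopt P1 X = ennreal (d X)" for X
    unfolding hit_time_def N_def[symmetric] dsum
    by (rule suminf_ennreal_eq) (use s1nn summ' in \<open>auto intro: summable_sums\<close>)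
  have rec: "d X = 1 + (\<Sum>Y\<in>N. P1 X Y * d Y)" if "X \<in> N" for X
  proof -
    have "d X = surv N P1 0 X + (\<Sum>t. surv N P1 (Suc t) X)"
      unfolding dsum using suminf_split_head[OF summ'[of X]] by simp
    also have "\<dots> = 1 + (\<Sum>t. \<Sum>Y\<in>N. P1 X Y * surv N P1 t Y)"
      using that by simp
    also have "\<dots> = 1 + (\<Sum>Y\<in>N. \<Sum>t. P1 X Y * surv N P1 t Y)"
      by (subst suminf_sum) (auto intro: summable_mult summ')
    also have "\<dots> = 1 + (\<Sum>Y\<in>N. P1 X Y * d Y)"
      by (simp add: dsum suminf_mult summ')
    finally show ?thesis .
  qed
  obtain X0 where X0: "X0 \<in> N" and dr: "drift S Sopt d P1 X0 < drift S Sopt d P2 X0"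
    using assms(6) N_def d_def by auto
  have lt: "(\<Sum>Y\<in>N. P2 X0 Y * d Y) < (\<Sum>Y\<in>N. P1 X0 Y * d Y)"
    using dr by (simp add: drift_def N_def)
  define p where "p = (\<lambda>X. if X = X0 then 0 else (1::real))"
  define Q where "Q = mixed p P1 P2"
  have Qeq: "Q X Y = (if X = X0 then P2 X Y else P1 X Y)" for X Y
    by (simp add: Q_def mixed_def p_def)
  have Qnn: "\<forall>X\<in>N. \<forall>Y\<in>N. 0 \<le> Q X Y" using P1nn P2nn by (simp add: Qeq)
  define \<delta> where "\<delta> = (\<Sum>Y\<in>N. P1 X0 Y * d Y) - (\<Sum>Y\<in>N. P2 X0 Y * d Y)"
  have \<delta>pos: "\<delta> > 0" using lt \<delta>_def by simp
  have driftQ: "\<forall>X\<in>N. 1 + (\<Sum>Y\<in>N. Q X Y * d Y) \<le> d X"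
  proof
    fix X assume X: "X \<in> N"
    show "1 + (\<Sum>Y\<in>N. Q X Y * d Y) \<le> d X"
    proof (cases "X = X0")
      case True
      then show ?thesis using rec[OF X] lt by (simp add: Qeq)
    next
      case False
      then show ?thesis using rec[OF X] by (simp add: Qeq)
    qed
  qed
  have sQnn: "\<And>t X. 0 \<le> surv N Q t X" using Qnn by (rule surv_nonneg)
  have le: "hit_time S Sopt Q X \<le> hit_time S Sopt P1 X" for X
    unfolding hit_eq by (simp only: hit_time_def N_def[symmetric]) (rule ennsum_le[OF sQnn partial_le[OF Qnn dnn driftQ]])
  have part0: "(\<Sum>t<n. surv N Q t X0) \<le> d X0 - \<delta>" for n
  proof (cases n)
    case 0
    then show ?thesis using rec[OF X0] lt \<delta>_def dnn
      by (simp add: sum_nonneg mult_nonneg_nonneg P2nn X0)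
  next
    case (Suc m)
    have "(\<Sum>t<Suc m. surv N Q t X0) = 1 + (\<Sum>Y\<in>N. Q X0 Y * (\<Sum>t<m. surv N Q t Y))"
      using X0 by (rule surv_shift)
    also have "\<dots> \<le> 1 + (\<Sum>Y\<in>N. Q X0 Y * d Y)"
      using partial_le[OF Qnn dnn driftQ] Qnn X0 by (auto intro!: sum_mono mult_left_mono)
    also have "\<dots> = d X0 - \<delta>" using rec[OF X0] \<delta>_def by (simp add: Qeq)
    finally show ?thesis using Suc by simp
  qed
  have "hit_time S Sopt Q X0 \<le> ennreal (d X0 - \<delta>)"
    unfolding hit_time_def N_def[symmetric]
    by (rule ennsum_le[OF sQnn part0])
  also have "\<dots> < ennreal (d X0)"
  proof -
    have "d X0 - \<delta> \<ge> 0" using part0[of 0] by simp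
    then show ?thesis using \<delta>pos by (simp add: ennreal_lessI)
  qed
  finally have strict: "hit_time S Sopt Q X0 < hit_time S Sopt P1 X0" by (simp add: hit_eq)
  show ?thesis
  proof (intro exI conjI ballI)
    fix X assume "X \<in> S" then show "0 \<le> p X" "p X \<le> 1" by (auto simp: p_def)
  next
    fix X show "hit_time S Sopt (mixed p P1 P2) X \<le> hit_time S Sopt P1 X"
      using le Q_def by simp
  next
    show "\<exists>X\<in>S. hit_time S Sopt (mixed p P1 P2) X < hit_time S Sopt P1 X"
      using strict X0 Q_def N_def by auto
  qed
qed

end
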